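(* Let $m,p,q\in(0,\infty)$, let $(u,v)$ be an admissible pair of weights with respect to $(m,p)$, let $w$ be a weight and let $C\in(0,\infty)$. Then the inequality \[ \left(\int_0^\infty w(t)(f^*(t))^q\,dt\right)^{\frac1q}\le C\left(\int_0^\infty v(t)\left(\int_t^\infty u(s)(f^*(s))^m ds\right)^{\frac pm}dt\right)^{\frac1p} \] holds for all $f\in\mathscr M$ if and only if the inequality \[ \left(\int_0^\infty w(t)\left(\int_t^\infty h(y)\,dy\right)^q dt\right)^{\frac1q}\le C\left(\int_0^\infty v(t)\left(\int_t^\infty u(s)\left(\int_s^\infty h(y)\,dy\right)^m ds\right)^{\frac pm}dt\right)^{\frac1p} \] holds for all $h\in\mathscr M_+$.
   Context: $\mathscr M$ is the set of real-valued Lebesgue measurable functions on $\mathbb{R}^n$; for $f\in\mathscr M$, $f^*(t):=\inf\{s\ge0:\ |\{x\in\mathbb{R}^n: |f(x)|>s\}|\le t\}$, $t>0$, is the nonincreasing rearrangement. $\mathscr M_+$ is the cone of nonnegative locally integrable functions on $(0,\infty)$. A weight is a nonnegative measurable function on $(0,\infty)$. For a weight $u$, $U(s,t):=\int_s^t u$; $(u,v)$ is admissible with respect to $(m,p)$ if $0<\left(\int_0^t v(s)U(s,t)^{p/m}ds\right)^{1/p}<\infty$ for all $t\in(0,\infty)$. *)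

theory Defs
  imports "HOL-Analysis.Analysis"
begin

definition epow :: "ennreal \<Rightarrow> real \<Rightarrow> ennreal" where
  "epow x a = (if x = top then top else ennreal (enn2real x powr a))"

definition rearr :: "('a::euclidean_space \<Rightarrow> real) \<Rightarrow> real \<Rightarrow> ennreal" where
  "rearr f t = Inf {s::ennreal. emeasure lebesgue {x. s < ennreal \<bar>f x\<bar>} \<le> ennreal t}"

definition weight :: "(real \<Rightarrow> real) \<Rightarrow> bool" where
  "weight u \<longleftrightarrow> set_borel_measurable lborel {0<..} u \<and> (\<forall>t>0. 0 \<le> u t)"

definition Uint :: "(real \<Rightarrow> real) \<Rightarrow> real \<Rightarrow> real \<Rightarrow> ennreal" where
  "Uint u s t = (\<integral>\<^sup>+ y\<in>{s..t}. ennreal (u y) \<partial>lborel)"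

definition admissible :: "(real \<Rightarrow> real) \<Rightarrow> (real \<Rightarrow> real) \<Rightarrow> real \<Rightarrow> real \<Rightarrow> bool" where
  "admissible u v m p \<longleftrightarrow> (\<forall>t>0.
     0 < epow (\<integral>\<^sup>+ s\<in>{0<..<t}. ennreal (v s) * epow (Uint u s t) (p / m) \<partial>lborel) (1 / p) \<and>
     epow (\<integral>\<^sup>+ s\<in>{0<..<t}. ennreal (v s) * epow (Uint u s t) (p / m) \<partial>lborel) (1 / p) < \<infinity>)"

definition Mplus :: "(real \<Rightarrow> real) set" where
  "Mplus = {h. (\<forall>t>0. 0 \<le> h t) \<and> (\<forall>a b. 0 < a \<longrightarrow> a \<le> b \<longrightarrow> set_integrable lborel {a..b} h)}"

end

theory Submission
  imports Defs
begin

lemma epow_mono: assumes "x \<le> y" "0 < a" shows "epow x a \<le> epow y a"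
proof (cases "y = top")
  case True then show ?thesis by (simp add: epow_def)
next
  case False
  then have "x \<noteq> top" using assms(1) top.extremum_unique by blast
  moreover have "enn2real x \<le> enn2real y" using False assms(1) by (simp add: enn2real_mono less_top)
  ultimately show ?thesis using False assms
    by (auto simp: epow_def intro!: ennreal_leI powr_mono2)
qed

lemma epow_strict: assumes "x < y" "0 < a" shows "epow x a < epow y a"
proof -
  have xt: "x \<noteq> top" using assms(1) by auto
  show ?thesis
  proof (cases "y = top")
    case True then show ?thesis using xt by (simp add: epow_def)
  next
    case False
    then have "enn2real x < enn2real y" using xt assms(1)
      by (simp add: enn2real_less_iff less_top)
    moreover have "0 \<le> enn2real x" by simp
    ultimately have "enn2real x powr a < enn2real y powr a" using assms(2)
      by (simp add: powr_less_mono2)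
    then show ?thesis using False xt by (auto simp: epow_def intro!: ennreal_lessI)
  qed
qed

lemma epow_inv: assumes "0 < a" shows "epow (epow x a) (1/a) = x"
proof (cases "x = top")
  case True then show ?thesis by (simp add: epow_def)
next
  case False
  have "(enn2real x powr a) powr (1/a) = enn2real x" using assms
    by (simp add: powr_powr)
  then show ?thesis using False by (simp add: epow_def ennreal_enn2real less_top[symmetric])
qed

lemma epow_inv': assumes "0 < a" shows "epow (epow x (1/a)) a = x"
  using epow_inv[of "1/a" x] assms by simp

lemma epow_lsc: assumes "z < epow x a" "0 < a" shows "\<exists>y<x. z < epow y a"
proof -
  obtain z2 where z2: "z < z2" "z2 < epow x a" using dense assms(1) by blast
  define y where "y = epow z2 (1/a)"
  have e: "epow y a = z2" unfolding y_def using epow_inv' assms(2) by simp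
  have "y < x"
  proof (rule ccontr)
    assume "\<not> y < x" then have "x \<le> y" by simp
    then have "epow x a \<le> epow y a" using epow_mono assms(2) by blast
    then show False using e z2 by simp
  qed
  then show ?thesis using e z2 by blast
qed

lemma antimono_borel:
  fixes H :: "real \<Rightarrow> ennreal" assumes "antimono H" shows "H \<in> borel_measurable borel"
proof (rule borel_measurableI_greater)
  fix a
  define D where "D = {x. a < H x}"
  have down: "y \<in> D" if "x \<in> D" "y \<le> x" for x y
  proof -
    have "H x \<le> H y" using assms that(2) by (simp add: antimono_def)
    then show ?thesis using that(1) unfolding D_def by (auto intro: order_less_le_trans)
  qed
  have "D \<in> sets borel"
  proof (cases "D = {}")
    case True then show ?thesis by simp
  next
    case ne: False
    show ?thesis
    proof (cases "bdd_above D")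
      case False
      have "y \<in> D" for y
      proof -
        from False obtain x where "x \<in> D" "y < x" unfolding bdd_above_def by (meson not_le)
        then show "y \<in> D" using down by force
      qed
      then have "D = UNIV" by auto
      then show ?thesis by simp
    next
      case True
      define s where "s = Sup D"
      show ?thesis
      proof (cases "s \<in> D")
        case True
        have "D = {..s}" using True down cSup_upper[OF _ \<open>bdd_above D\<close>] unfolding s_def by auto
        then show ?thesis by simp
      next
        case False
        have "D = {..<s}"
        proof safe
          fix x assume "x \<in> D" then show "x < s" using False cSup_upper[OF _ \<open>bdd_above D\<close>]
            unfolding s_def by (metis order_le_less)
        next
          fix x assume "x < s"
          then obtain y where "y \<in> D" "x < y" using less_cSup_iff[OF ne \<open>bdd_above D\<close>] s_def by blast
          then show "x \<in> D" using down by force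
        qed
        then show ?thesis by simp
      qed
    qed
  qed
  then show "{x \<in> space borel. a < H x} \<in> sets borel" unfolding D_def by simp
qed

lemma rearr_antimono: "antimono (rearr f)"
proof (rule antimonoI)
  fix t t' :: real assume tt: "t \<le> t'"
  show "rearr f t' \<le> rearr f t" unfolding rearr_def
  proof (rule Inf_superset_mono, rule subsetI)
    fix s assume "s \<in> {s. emeasure lebesgue {x. s < ennreal \<bar>f x\<bar>} \<le> ennreal t}"
    then have "emeasure lebesgue {x. s < ennreal \<bar>f x\<bar>} \<le> ennreal t" by simp
    also have "\<dots> \<le> ennreal t'" using tt by (rule ennreal_leI)
    finally show "s \<in> {s. emeasure lebesgue {x. s < ennreal \<bar>f x\<bar>} \<le> ennreal t'}" by simp
  qed
qed

lemma rearr_rc: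
  fixes f :: "'a::euclidean_space \<Rightarrow> real"
  assumes f: "f \<in> borel_measurable lebesgue" and x: "x < rearr f t"
  shows "\<exists>r>t. x < rearr f r"
proof (rule ccontr)
  assume "\<not> (\<exists>r>t. x < rearr f r)"
  then have le: "\<And>r. r > t \<Longrightarrow> rearr f r \<le> x" using not_less by blast
  have meas: "{y. s < ennreal \<bar>f y\<bar>} \<in> sets lebesgue" for s
  proof -
    have "Measurable.pred lebesgue (\<lambda>y. s < ennreal \<bar>f y\<bar>)" using f by measurable
    then show ?thesis by (simp add: pred_def)
  qed
  have "rearr f t \<le> x"
  proof (rule dense_ge)
    fix x' assume "x < x'"
    have "emeasure lebesgue {y. x' < ennreal \<bar>f y\<bar>} \<le> ennreal t"
    proof (rule dense_ge)
      fix b assume b: "ennreal t < b"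
      show "emeasure lebesgue {y. x' < ennreal \<bar>f y\<bar>} \<le> b"
      proof (cases "b = top")
        case True then show ?thesis by simp
      next
        case False
        then obtain r where r: "b = ennreal r" "r \<ge> 0" by (cases b rule: ennreal_cases) auto
        have "r > t"
        proof (rule ccontr)
          assume "\<not> r > t" then have "ennreal r \<le> ennreal t" by (simp add: ennreal_leI)
          with b r show False by simp
        qed
        then have "rearr f r < x'" using le \<open>x < x'\<close> by (meson order_le_less_trans)
        then obtain s where s0: "s \<in> {s. emeasure lebesgue {y. s < ennreal \<bar>f y\<bar>} \<le> ennreal r}" "s < x'"
          unfolding rearr_def Inf_less_iff by blast
        then have s: "emeasure lebesgue {y. s < ennreal \<bar>f y\<bar>} \<le> ennreal r" "s < x'" by simp_all
        have "emeasure lebesgue {y. x' < ennreal \<bar>f y\<bar>} \<le> emeasure lebesgue {y. s < ennreal \<bar>f y\<bar>}"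
          by (intro emeasure_mono meas) (use s(2) in \<open>auto dest: order.strict_trans\<close>)
        then show ?thesis using s(1) r by simp
      qed
    qed
    then have "x' \<in> {s. emeasure lebesgue {x. s < ennreal \<bar>f x\<bar>} \<le> ennreal t}" by simp
    then show "rearr f t \<le> x'" unfolding rearr_def by (rule Inf_lower)
  qed
  then show False using x by simp
qed

definition Hf :: "(real \<Rightarrow> real) \<Rightarrow> real \<Rightarrow> ennreal" where
  "Hf h t = (\<integral>\<^sup>+ y\<in>{t<..}. ennreal (h y) \<partial>lborel)"

lemma Mplus_meas:
  assumes h: "h \<in> Mplus"
  shows "(\<lambda>x. ennreal (h x) * indicator {0<..} x) \<in> borel_measurable borel"
proof -
  define A where "A n = {1 / real (Suc n) .. real (Suc n)}" for n
  have m: "(\<lambda>x. ennreal (indicator (A n) x *\<^sub>R h x)) \<in> borel_measurable borel" for n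
  proof -
    have all: "\<forall>a b. 0 < a \<longrightarrow> a \<le> b \<longrightarrow> set_integrable lborel {a..b} h" using h unfolding Mplus_def by auto
    have a: "0 < 1 / real (Suc n)" by simp
    have "1 / real (Suc n) \<le> 1" by simp
    moreover have "1 \<le> real (Suc n)" by simp
    ultimately have b: "1 / real (Suc n) \<le> real (Suc n)" by linarith
    have "set_integrable lborel (A n) h" using all a b unfolding A_def by blast
    then have "(\<lambda>x. indicator (A n) x *\<^sub>R h x) \<in> borel_measurable lborel"
      unfolding set_integrable_def by (rule borel_measurable_integrable)
    then show ?thesis by simp
  qed
  have eq: "ennreal (h x) * indicator {0<..} x = (SUP n. ennreal (indicator (A n) x *\<^sub>R h x))" for x
  proof (cases "x > 0")
    case True
    then have hx: "h x \<ge> 0" using h unfolding Mplus_def by auto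
    obtain n1 where n1: "1 / x < real n1" using reals_Archimedean2 by blast
    obtain n2 where n2: "x < real n2" using reals_Archimedean2 by blast
    define n where "n = max n1 n2"
    have "1 / real (Suc n) \<le> x"
    proof -
      have "1 / x < real (Suc n)" using n1 unfolding n_def by linarith
      then show ?thesis using True by (simp add: divide_simps mult.commute)
    qed
    moreover have "x \<le> real (Suc n)" using n2 unfolding n_def by linarith
    ultimately have xin: "x \<in> A n" unfolding A_def by auto
    have "(SUP n. ennreal (indicator (A n) x *\<^sub>R h x)) = ennreal (h x)"
    proof (rule antisym)
      show "(SUP n. ennreal (indicator (A n) x *\<^sub>R h x)) \<le> ennreal (h x)"
        using hx by (intro SUP_least) (auto simp: indicator_def)
      show "ennreal (h x) \<le> (SUP n. ennreal (indicator (A n) x *\<^sub>R h x))"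
        using xin by (intro SUP_upper2[of n]) auto
    qed
    then show ?thesis using True by simp
  next
    case False
    have "x \<notin> A n" for n
    proof -
      have p: "0 < 1 / real (Suc n)" by simp
      show ?thesis
      proof
        assume "x \<in> A n" then have "1 / real (Suc n) \<le> x" unfolding A_def by simp
        with p False show False by linarith
      qed
    qed
    then show ?thesis using False by simp
  qed
  show ?thesis unfolding eq using m by measurable
qed

lemma Mplus_meas':
  assumes h: "h \<in> Mplus" and r: "0 \<le> r"
  shows "(\<lambda>x. ennreal (h x) * indicator {r<..} x) \<in> borel_measurable borel"
proof -
  have "(\<lambda>x. ennreal (h x) * indicator {r<..} x) = (\<lambda>x. (ennreal (h x) * indicator {0<..} x) * indicator {r<..} x)"
    using r by (auto simp: indicator_def fun_eq_iff)
  then show ?thesis using Mplus_meas[OF h] by simp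
qed

lemma Hf_antimono: "antimono (Hf h)"
  unfolding antimono_def Hf_def
  by (auto intro!: nn_integral_mono simp: indicator_def)

lemma Hf_rc:
  assumes h: "h \<in> Mplus" and t: "0 \<le> t" and x: "x < Hf h t"
  shows "\<exists>r>t. x < Hf h r"
proof -
  define F where "F n y = ennreal (h y) * indicator {t + 1 / real (Suc n)<..} y" for n y
  have inc: "incseq F"
  proof (rule incseq_SucI, rule le_funI)
    fix n y
    have "1 / real (Suc (Suc n)) \<le> 1 / real (Suc n)" by (simp add: frac_le)
    then show "F n y \<le> F (Suc n) y" unfolding F_def by (auto simp: indicator_def)
  qed
  have meas: "F n \<in> borel_measurable lborel" for n
    using Mplus_meas'[OF h, of "t + 1 / real (Suc n)"] t unfolding F_def by simp
  have sup: "(SUP n. F n y) = ennreal (h y) * indicator {t<..} y" for y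
  proof (cases "t < y")
    case True
    obtain n where n: "1 / (y - t) < real n" using reals_Archimedean2 by blast
    have "1 / real (Suc n) < y - t"
    proof -
      have "1 / (y - t) < real (Suc n)" using n by linarith
      then show ?thesis using True by (simp add: divide_simps mult.commute)
    qed
    then have "y \<in> {t + 1 / real (Suc n)<..}" by simp
    then have "F n y = ennreal (h y)" unfolding F_def by simp
    moreover have "F m y \<le> ennreal (h y)" for m unfolding F_def by (simp add: indicator_def)
    ultimately have "(SUP n. F n y) = ennreal (h y)"
      by (intro antisym SUP_least) (auto intro: SUP_upper2[of n])
    then show ?thesis using True by simp
  next
    case False
    have "F n y = 0" for n
    proof -
      have p: "0 < 1 / real (Suc n)" by simp
      have "y \<notin> {t + 1 / real (Suc n)<..}"
      proof
        assume "y \<in> {t + 1 / real (Suc n)<..}" then have "t + 1 / real (Suc n) < y" by simp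
        with p False show False by linarith
      qed
      then show ?thesis unfolding F_def by simp
    qed
    then show ?thesis using False by simp
  qed
  have "Hf h t = (SUP n. integral\<^sup>N lborel (F n))"
    unfolding Hf_def using nn_integral_monotone_convergence_SUP[OF inc meas] sup by simp
  then obtain n where "x < integral\<^sup>N lborel (F n)" using x by (auto simp: less_SUP_iff)
  then have "x < Hf h (t + 1 / real (Suc n))" unfolding Hf_def F_def by simp
  then show ?thesis by (intro exI[of _ "t + 1 / real (Suc n)"]) auto
qed

lemma Hf_dich:
  assumes h: "h \<in> Mplus" and t0: "0 < t0" "Hf h t0 = top" and t: "0 < t"
  shows "Hf h t = top"
proof (cases "t \<le> t0")
  case True
  then show ?thesis using Hf_antimono[of h] t0 unfolding antimono_def by (metis top.extremum_unique)
next
  case False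
  have int: "set_integrable lborel {t0..t} h" using h t0 False unfolding Mplus_def by auto
  then have fin: "(\<integral>\<^sup>+ y. ennreal (norm (indicator {t0..t} y *\<^sub>R h y)) \<partial>lborel) < \<infinity>"
    unfolding set_integrable_def integrable_iff_bounded by simp
  have "(\<integral>\<^sup>+ y\<in>{t0<..t}. ennreal (h y) \<partial>lborel) \<le> (\<integral>\<^sup>+ y. ennreal (norm (indicator {t0..t} y *\<^sub>R h y)) \<partial>lborel)"
    by (intro nn_integral_mono) (auto simp: indicator_def)
  then have fin2: "(\<integral>\<^sup>+ y\<in>{t0<..t}. ennreal (h y) \<partial>lborel) < \<infinity>" using fin by simp
  have "Hf h t0 = (\<integral>\<^sup>+ y. ennreal (h y) * indicator {t0<..t} y + ennreal (h y) * indicator {t<..} y \<partial>lborel)"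
    unfolding Hf_def using False by (intro nn_integral_cong) (auto simp: indicator_def)
  also have "\<dots> = (\<integral>\<^sup>+ y\<in>{t0<..t}. ennreal (h y) \<partial>lborel) + Hf h t"
  proof -
    have m1: "(\<lambda>y. ennreal (h y) * indicator {t0<..t} y) \<in> borel_measurable lborel"
    proof -
      have "(\<lambda>y. ennreal (h y) * indicator {t0<..t} y) = (\<lambda>y. (ennreal (h y) * indicator {0<..} y) * indicator {t0<..t} y)"
        using t0 by (auto simp: indicator_def fun_eq_iff)
      then show ?thesis using Mplus_meas[OF h] by simp
    qed
    show ?thesis unfolding Hf_def
      by (rule nn_integral_add) (use m1 Mplus_meas'[OF h, of t] t in auto)
  qed
  finally have "top = (\<integral>\<^sup>+ y\<in>{t0<..t}. ennreal (h y) \<partial>lborel) + Hf h t" using t0 by simp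
  then have "(\<integral>\<^sup>+ y\<in>{t0<..t}. ennreal (h y) \<partial>lborel) + Hf h t = top" by (rule sym)
  then have "(\<integral>\<^sup>+ y\<in>{t0<..t}. ennreal (h y) \<partial>lborel) = top \<or> Hf h t = top"
    by (simp only: ennreal_add_eq_top)
  then show ?thesis using fin2 by auto
qed

definition rho :: "'a::euclidean_space \<Rightarrow> real" where
  "rho x = unit_ball_vol (real DIM('a)) * norm x ^ DIM('a)"

lemma rho_meas: "rho \<in> borel_measurable borel"
  unfolding rho_def by measurable

lemma rho_leb: "rho \<in> borel_measurable lebesgue"
  using rho_meas by (intro measurable_completion) simp

lemma rho_nonneg: "0 \<le> rho x"
  unfolding rho_def by simp

lemma rho_less:
  assumes r: "0 \<le> r"
  shows "emeasure lebesgue {x::'a::euclidean_space. rho x < r} = ennreal r"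
proof -
  define n where "n = DIM('a)"
  define c where "c = unit_ball_vol (real n)"
  have n: "0 < n" unfolding n_def by simp
  have c: "0 < c" unfolding c_def by simp
  define R where "R = root n (r / c)"
  have R: "0 \<le> R" unfolding R_def using r c by (simp add: real_root_ge_zero)
  have eq: "{x::'a. rho x < r} = ball 0 R"
  proof (rule set_eqI)
    fix x :: 'a
    have "rho x < r \<longleftrightarrow> norm x ^ n < r / c"
      unfolding rho_def c_def[symmetric] n_def[symmetric] using c
      by (simp add: less_divide_eq mult.commute)
    also have "\<dots> \<longleftrightarrow> root n (norm x ^ n) < root n (r / c)"
      using n by simp
    also have "root n (norm x ^ n) = norm x" using n by (simp add: real_root_power_cancel)
    finally show "x \<in> {x. rho x < r} \<longleftrightarrow> x \<in> ball 0 R" unfolding R_def by simp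
  qed
  have "emeasure lebesgue (ball (0::'a) R) = emeasure lborel (ball (0::'a) R)"
    by simp
  also have "\<dots> = ennreal (c * R ^ n)" unfolding c_def n_def using emeasure_ball[where c="0::'a" and r=R] R by simp
  also have "c * R ^ n = r" unfolding R_def using n c r by simp
  finally show ?thesis unfolding eq .
qed

lemma rho_sets: "{x::'a::euclidean_space. rho x < r} \<in> sets lebesgue"
proof -
  have "Measurable.pred lebesgue (\<lambda>x::'a. rho x < r)" using rho_leb by measurable
  then show ?thesis by (simp add: pred_def)
qed

lemma realize:
  fixes H :: "real \<Rightarrow> ennreal"
  assumes anti: "antimono H" and rc: "\<And>t x. 0 < t \<Longrightarrow> x < H t \<Longrightarrow> \<exists>r>t. x < H r"
    and dich: "(\<forall>t>0. H t = top) \<or> (\<forall>t>0. H t < top)"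
  shows "\<exists>f::'a::euclidean_space \<Rightarrow> real. f \<in> borel_measurable lebesgue \<and> (\<forall>t>0. rearr f t = H t)"
  using dich
proof
  assume Htop: "\<forall>t>0. H t = top"
  have "rearr (rho::'a \<Rightarrow> real) t = top" if t: "0 < t" for t
  proof -
    have "s = top" if s: "emeasure lebesgue {x::'a. s < ennreal \<bar>rho x\<bar>} \<le> ennreal t" for s
    proof (rule ccontr)
      assume "s \<noteq> top"
      then obtain s0 where s0: "s = ennreal s0" "0 \<le> s0" by (cases s rule: ennreal_cases) auto
      have sub: "{x::'a. rho x < s0 + t + 1} \<subseteq> {x. rho x < s0 + 1/2} \<union> {x. s < ennreal \<bar>rho x\<bar>}"
      proof
        fix x :: 'a assume "x \<in> {x. rho x < s0 + t + 1}"
        show "x \<in> {x. rho x < s0 + 1/2} \<union> {x. s < ennreal \<bar>rho x\<bar>}"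
        proof (cases "rho x < s0 + 1/2")
          case False
          then have "s0 < \<bar>rho x\<bar>" using rho_nonneg[of x] by simp
          then have "s < ennreal \<bar>rho x\<bar>" unfolding s0 using s0(2) by (simp add: ennreal_less_iff)
          then show ?thesis by simp
        qed simp
      qed
      have ms: "{x::'a. s < ennreal \<bar>rho x\<bar>} \<in> sets lebesgue"
      proof -
        have "Measurable.pred lebesgue (\<lambda>x::'a. s < ennreal \<bar>rho x\<bar>)" using rho_leb by measurable
        then show ?thesis by (simp add: pred_def)
      qed
      have e1: "emeasure lebesgue {x::'a. rho x < s0 + 1/2} = ennreal (s0 + 1/2)"
        using s0 by (intro rho_less) simp
      have "ennreal (s0 + t + 1) = emeasure lebesgue {x::'a. rho x < s0 + t + 1}"
        using s0 t by (intro rho_less[symmetric]) simp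
      also have "\<dots> \<le> emeasure lebesgue ({x::'a. rho x < s0 + 1/2} \<union> {x. s < ennreal \<bar>rho x\<bar>})"
        using sub ms rho_sets by (intro emeasure_mono) auto
      also have "\<dots> \<le> emeasure lebesgue {x::'a. rho x < s0 + 1/2} + emeasure lebesgue {x::'a. s < ennreal \<bar>rho x\<bar>}"
        using ms rho_sets by (intro emeasure_subadditive) auto
      also have "\<dots> \<le> ennreal (s0 + 1/2) + ennreal t"
        using e1 s by (intro add_mono) (simp_all only: e1 order_refl s)
      also have "\<dots> = ennreal (s0 + 1/2 + t)" using s0 t by (simp add: ennreal_plus)
      finally have "s0 + t + 1 \<le> s0 + 1/2 + t" using s0 t by (subst (asm) ennreal_le_iff) auto
      then show False by simp
    qed
    then have "top \<le> rearr (rho::'a \<Rightarrow> real) t" unfolding rearr_def by (intro Inf_greatest) auto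
    then show ?thesis by (simp add: top_unique)
  qed
  then have "\<forall>t>0. rearr (rho::'a \<Rightarrow> real) t = H t" using Htop by simp
  then show ?thesis using rho_leb by blast
next
  assume Hfin: "\<forall>t>0. H t < top"
  define f :: "'a \<Rightarrow> real" where "f x = enn2real (H (rho x))" for x
  have Hm: "H \<in> borel_measurable borel" using anti by (rule antimono_borel)
  have fm: "f \<in> borel_measurable lebesgue"
    unfolding f_def using Hm rho_leb by measurable
  have ms: "{x. s < ennreal \<bar>f x\<bar>} \<in> sets lebesgue" for s
  proof -
    have "Measurable.pred lebesgue (\<lambda>x. s < ennreal \<bar>f x\<bar>)" using fm by measurable
    then show ?thesis by (simp add: pred_def)
  qed
  have fx: "ennreal \<bar>f x\<bar> = H (rho x)" if "0 < rho x" for x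
    using Hfin that unfolding f_def by (simp add: ennreal_enn2real less_top[symmetric])
  have "rearr f t = H t" if t: "0 < t" for t
  proof -
    let ?S = "{s. emeasure lebesgue {x. s < ennreal \<bar>f x\<bar>} \<le> ennreal t}"
    have "{x. H t < ennreal \<bar>f x\<bar>} \<subseteq> {x::'a. rho x < t}"
    proof
      fix x assume x: "x \<in> {x. H t < ennreal \<bar>f x\<bar>}"
      show "x \<in> {x::'a. rho x < t}"
      proof (rule ccontr)
        assume "x \<notin> {x::'a. rho x < t}"
        then have "t \<le> rho x" by simp
        then have "H (rho x) \<le> H t" using anti by (simp add: antimono_def)
        moreover have "ennreal \<bar>f x\<bar> = H (rho x)" using fx \<open>t \<le> rho x\<close> t by simp
        ultimately show False using x by simp
      qed
    qed
    then have "emeasure lebesgue {x. H t < ennreal \<bar>f x\<bar>} \<le> emeasure lebesgue {x::'a. rho x < t}"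
      by (rule emeasure_mono) (simp add: rho_sets)
    then have in_S: "H t \<in> ?S" using rho_less[where 'a='a, of t] t by simp
    have lb: "H t \<le> s" if s: "s \<in> ?S" for s
    proof (rule ccontr)
      assume "\<not> H t \<le> s"
      then have "s < H t" by simp
      then obtain r where r: "r > t" "s < H r" using rc t by blast
      have "ennreal r \<le> emeasure lebesgue {x. s < ennreal \<bar>f x\<bar>}"
      proof (rule ennreal_le_epsilon)
        fix e :: real assume e: "0 < e"
        have sub: "{x::'a. rho x < r} \<subseteq> {x. s < ennreal \<bar>f x\<bar>} \<union> {x::'a. rho x < e}"
        proof
          fix x assume x: "x \<in> {x::'a. rho x < r}"
          show "x \<in> {x. s < ennreal \<bar>f x\<bar>} \<union> {x::'a. rho x < e}"
          proof (cases "rho x < e")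
            case False
            then have pos: "0 < rho x" using e by simp
            have "H r \<le> H (rho x)" using anti x by (simp add: antimono_def)
            then have "s < ennreal \<bar>f x\<bar>" using fx[OF pos] r by simp
            then show ?thesis by simp
          qed simp
        qed
        have "ennreal r = emeasure lebesgue {x::'a. rho x < r}" using rho_less[where 'a='a, of r] r t by simp
        also have "\<dots> \<le> emeasure lebesgue ({x. s < ennreal \<bar>f x\<bar>} \<union> {x::'a. rho x < e})"
          using sub ms rho_sets by (intro emeasure_mono) auto
        also have "\<dots> \<le> emeasure lebesgue {x. s < ennreal \<bar>f x\<bar>} + emeasure lebesgue {x::'a. rho x < e}"
          using ms rho_sets by (intro emeasure_subadditive) auto
        also have "\<dots> = emeasure lebesgue {x. s < ennreal \<bar>f x\<bar>} + ennreal e"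
          using rho_less[where 'a='a, of e] e by simp
        finally show "ennreal r \<le> emeasure lebesgue {x. s < ennreal \<bar>f x\<bar>} + ennreal e" .
      qed
      also have "\<dots> \<le> ennreal t" using s by simp
      finally have "r \<le> t" using t by (subst (asm) ennreal_le_iff) auto
      then show False using r by simp
    qed
    have "rearr f t = Inf ?S" unfolding rearr_def ..
    also have "\<dots> = H t"
    proof (rule antisym)
      show "Inf ?S \<le> H t" using in_S by (rule Inf_lower)
      show "H t \<le> Inf ?S" by (rule Inf_greatest) (rule lb)
    qed
    finally show ?thesis .
  qed
  then show ?thesis using fm by blast
qed

definition LHS :: "(real \<Rightarrow> real) \<Rightarrow> real \<Rightarrow> (real \<Rightarrow> ennreal) \<Rightarrow> ennreal" where
  "LHS w q A = epow (\<integral>\<^sup>+ t\<in>{0<..}. ennreal (w t) * epow (A t) q \<partial>lborel) (1 / q)"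

definition RHS :: "real \<Rightarrow> (real \<Rightarrow> real) \<Rightarrow> (real \<Rightarrow> real) \<Rightarrow> real \<Rightarrow> real \<Rightarrow> (real \<Rightarrow> ennreal) \<Rightarrow> ennreal" where
  "RHS C u v m p A = ennreal C * epow (\<integral>\<^sup>+ t\<in>{0<..}. ennreal (v t) *
                 epow (\<integral>\<^sup>+ s\<in>{t<..}. ennreal (u s) * epow (A s) m \<partial>lborel) (p / m) \<partial>lborel) (1 / p)"

lemma LHS_cong:
  assumes "\<And>t. 0 < t \<Longrightarrow> A t = B t"
  shows "LHS w q A = LHS w q B"
proof -
  have "(\<integral>\<^sup>+ t\<in>{0<..}. ennreal (w t) * epow (A t) q \<partial>lborel) = (\<integral>\<^sup>+ t\<in>{0<..}. ennreal (w t) * epow (B t) q \<partial>lborel)"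
    by (intro nn_integral_cong) (auto simp: indicator_def assms)
  then show ?thesis unfolding LHS_def by simp
qed

lemma RHS_cong:
  assumes "\<And>t. 0 < t \<Longrightarrow> A t = B t"
  shows "RHS C u v m p A = RHS C u v m p B"
proof -
  have i: "(\<integral>\<^sup>+ s\<in>{t<..}. ennreal (u s) * epow (A s) m \<partial>lborel) = (\<integral>\<^sup>+ s\<in>{t<..}. ennreal (u s) * epow (B s) m \<partial>lborel)"
    if "0 < t" for t
    using that by (intro nn_integral_cong) (auto simp: indicator_def assms)
  have "(\<integral>\<^sup>+ t\<in>{0<..}. ennreal (v t) * epow (\<integral>\<^sup>+ s\<in>{t<..}. ennreal (u s) * epow (A s) m \<partial>lborel) (p / m) \<partial>lborel)
      = (\<integral>\<^sup>+ t\<in>{0<..}. ennreal (v t) * epow (\<integral>\<^sup>+ s\<in>{t<..}. ennreal (u s) * epow (B s) m \<partial>lborel) (p / m) \<partial>lborel)"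
    by (intro nn_integral_cong) (simp add: i split: split_indicator)
  then show ?thesis unfolding RHS_def by simp
qed

lemma LHS_mono:
  assumes "\<And>t. 0 < t \<Longrightarrow> A t \<le> B t" "0 < q"
  shows "LHS w q A \<le> LHS w q B"
proof -
  have "(\<integral>\<^sup>+ t\<in>{0<..}. ennreal (w t) * epow (A t) q \<partial>lborel) \<le> (\<integral>\<^sup>+ t\<in>{0<..}. ennreal (w t) * epow (B t) q \<partial>lborel)"
    by (intro nn_integral_mono) (auto simp: indicator_def assms intro!: mult_left_mono epow_mono)
  then show ?thesis unfolding LHS_def using assms(2) by (intro epow_mono) auto
qed

lemma RHS_mono:
  assumes "\<And>t. 0 < t \<Longrightarrow> A t \<le> B t" "0 < m" "0 < p"
  shows "RHS C u v m p A \<le> RHS C u v m p B"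
proof -
  have i: "(\<integral>\<^sup>+ s\<in>{t<..}. ennreal (u s) * epow (A s) m \<partial>lborel) \<le> (\<integral>\<^sup>+ s\<in>{t<..}. ennreal (u s) * epow (B s) m \<partial>lborel)"
    if "0 < t" for t
    using that by (intro nn_integral_mono) (auto simp: indicator_def assms intro!: mult_left_mono epow_mono)
  have "(\<integral>\<^sup>+ t\<in>{0<..}. ennreal (v t) * epow (\<integral>\<^sup>+ s\<in>{t<..}. ennreal (u s) * epow (A s) m \<partial>lborel) (p / m) \<partial>lborel)
      \<le> (\<integral>\<^sup>+ t\<in>{0<..}. ennreal (v t) * epow (\<integral>\<^sup>+ s\<in>{t<..}. ennreal (u s) * epow (B s) m \<partial>lborel) (p / m) \<partial>lborel)"
    using assms(2,3) by (intro nn_integral_mono) (auto split: split_indicator intro!: mult_left_mono epow_mono i)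
  then show ?thesis unfolding RHS_def using assms(3) by (intro mult_left_mono epow_mono) auto
qed

lemma dir1:
  assumes F: "\<forall>f :: 'a::euclidean_space \<Rightarrow> real. f \<in> borel_measurable lebesgue \<longrightarrow>
                 LHS w q (rearr f) \<le> RHS C u v m p (rearr f)"
    and h: "h \<in> Mplus"
  shows "LHS w q (Hf h) \<le> RHS C u v m p (Hf h)"
proof -
  have dich: "(\<forall>t>0. Hf h t = top) \<or> (\<forall>t>0. Hf h t < top)"
  proof (cases "\<exists>t0>0. Hf h t0 = top")
    case True
    then obtain t0 where "0 < t0" "Hf h t0 = top" by blast
    then show ?thesis using Hf_dich[OF h] by blast
  next
    case False then show ?thesis by (auto simp: less_top)
  qed
  obtain f :: "'a \<Rightarrow> real" where f: "f \<in> borel_measurable lebesgue" "\<forall>t>0. rearr f t = Hf h t"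
    using realize[OF Hf_antimono Hf_rc[OF h] dich] by (auto intro: less_imp_le)
  have "LHS w q (Hf h) = LHS w q (rearr f)" using f(2) by (intro LHS_cong) simp
  also have "\<dots> \<le> RHS C u v m p (rearr f)" using F f(1) by blast
  also have "\<dots> = RHS C u v m p (Hf h)" using f(2) by (intro RHS_cong) simp
  finally show ?thesis .
qed

lemma cmult_lsc:
  fixes z c b :: ennreal
  assumes "z < c * b"
  shows "\<exists>y<b. z < c * y"
proof -
  have b0: "b \<noteq> 0" "c \<noteq> 0" using assms by auto
  have "((\<lambda>y. c * y) \<longlongrightarrow> c * b) (at_left b)"
    by (intro tendsto_mult_ennreal tendsto_const tendsto_ident_at) (use b0 in auto)
  then have ev: "eventually (\<lambda>y. z < c * y) (at_left b)" using assms by (rule order_tendstoD)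
  have "0 < b" using b0 by (simp add: zero_less_iff_neq_zero)
  then obtain b' where b': "b' < b" "\<forall>y>b'. y < b \<longrightarrow> z < c * y"
    using ev by (auto simp: eventually_at_left)
  obtain y where "b' < y" "y < b" using dense b'(1) by blast
  then show ?thesis using b'(2) by blast
qed

lemma comp_lsc:
  fixes c :: ennreal
  assumes "z < c * epow a q" "0 < q"
  shows "\<exists>y<a. z < c * epow y q"
proof -
  obtain y1 where y1: "y1 < epow a q" "z < c * y1" using cmult_lsc[OF assms(1)] by blast
  obtain y where y: "y < a" "y1 < epow y q" using epow_lsc[OF y1(1) assms(2)] by blast
  have "c * y1 \<le> c * epow y q" using y(2) by (intro mult_left_mono) auto
  then show ?thesis using y(1) y1(2) by (meson order_less_le_trans)
qed

definition gk :: "(real \<Rightarrow> ennreal) \<Rightarrow> nat \<Rightarrow> real \<Rightarrow> real" where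
  "gk \<phi> k y = (if 0 < y \<and> y < real k then enn2real (min (\<phi> y) (of_nat k)) else 0)"

definition hk :: "(real \<Rightarrow> ennreal) \<Rightarrow> nat \<Rightarrow> real \<Rightarrow> real" where
  "hk \<phi> k y = real k * (gk \<phi> k y - gk \<phi> k (y + 1 / real k))"

lemma gk_nonneg: "0 \<le> gk \<phi> k y"
  by (simp add: gk_def)

lemma gk_ennreal: "ennreal (gk \<phi> k y) = (if 0 < y \<and> y < real k then min (\<phi> y) (of_nat k) else 0)"
proof -
  have "min (\<phi> y) (of_nat k) < top"
    by (metis min.strict_coboundedI2 of_nat_less_top)
  then show ?thesis unfolding gk_def by (simp add: ennreal_enn2real less_top[symmetric])
qed

lemma gk_le: "gk \<phi> k y \<le> real k"
proof -
  have "ennreal (gk \<phi> k y) \<le> of_nat k" unfolding gk_ennreal by auto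
  then show ?thesis by (simp add: ennreal_of_nat_eq_real_of_nat ennreal_le_iff)
qed

lemma gk_anti:
  assumes anti: "antimono \<phi>" and y: "0 < y" "y \<le> y'"
  shows "gk \<phi> k y' \<le> gk \<phi> k y"
proof -
  have "ennreal (gk \<phi> k y') \<le> ennreal (gk \<phi> k y)"
  proof (cases "0 < y' \<and> y' < real k")
    case True
    then have "0 < y \<and> y < real k" using y by auto
    moreover have "\<phi> y' \<le> \<phi> y" using anti y by (simp add: antimono_def)
    moreover have "min (\<phi> y') (of_nat k) \<le> min (\<phi> y) (of_nat k)" using calculation(2) by (rule min.mono) simp
    ultimately show ?thesis using True unfolding gk_ennreal by simp
  next
    case False
    then have "ennreal (gk \<phi> k y') = 0" unfolding gk_ennreal by auto
    then show ?thesis by simp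
  qed
  then show ?thesis using gk_nonneg[of \<phi> k y] by (simp add: ennreal_le_iff)
qed

lemma gk_meas:
  assumes anti: "antimono \<phi>"
  shows "gk \<phi> k \<in> borel_measurable borel"
proof -
  have [measurable]: "\<phi> \<in> borel_measurable borel" using anti by (rule antimono_borel)
  show ?thesis unfolding gk_def[abs_def] by measurable
qed

lemma hk_meas:
  assumes anti: "antimono \<phi>"
  shows "hk \<phi> k \<in> borel_measurable borel"
proof -
  have [measurable]: "gk \<phi> k \<in> borel_measurable borel" using anti by (rule gk_meas)
  show ?thesis unfolding hk_def[abs_def] by measurable
qed

lemma gk_int:
  assumes anti: "antimono \<phi>"
  shows "integrable lborel (gk \<phi> k)"
proof (rule Bochner_Integration.integrable_bound[where f="\<lambda>y. real k * indicator {0<..<real k} y"])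
  show "integrable lborel (\<lambda>y. real k * indicator {0<..<real k} y :: real)"
    by (intro Bochner_Integration.integrable_mult_right integrable_real_indicator) auto
  show "gk \<phi> k \<in> borel_measurable lborel" using gk_meas[OF anti] by simp
  show "AE y in lborel. norm (gk \<phi> k y) \<le> norm (real k * indicator {0<..<real k} y :: real)"
  proof (rule AE_I2)
    fix y
    show "norm (gk \<phi> k y) \<le> norm (real k * indicator {0<..<real k} y :: real)"
    proof (cases "0 < y \<and> y < real k")
      case True then show ?thesis using gk_le[of \<phi> k y] gk_nonneg[of \<phi> k y] by (simp add: indicator_def)
    next
      case False then have "gk \<phi> k y = 0" unfolding gk_def by auto
      then show ?thesis by simp
    qed
  qed
qed

lemma hk_int:
  assumes anti: "antimono \<phi>"
  shows "integrable lborel (hk \<phi> k)"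
proof -
  have "integrable lborel (\<lambda>x. gk \<phi> k (1 / real k + 1 * x))"
    by (rule lborel_integrable_real_affine[OF gk_int[OF anti]]) simp
  then have i2: "integrable lborel (\<lambda>y. gk \<phi> k (y + 1 / real k))" by (simp add: add.commute)
  have i3: "integrable lborel (\<lambda>y. gk \<phi> k y - gk \<phi> k (y + 1 / real k))"
    by (intro Bochner_Integration.integrable_diff gk_int[OF anti] i2)
  show ?thesis unfolding hk_def[abs_def]
    by (intro Bochner_Integration.integrable_mult_right) (rule i3)
qed

lemma hk_Mplus:
  assumes anti: "antimono \<phi>"
  shows "hk \<phi> k \<in> Mplus"
  unfolding Mplus_def
proof (safe)
  fix t :: real assume "0 < t"
  then have "gk \<phi> k (t + 1 / real k) \<le> gk \<phi> k t" by (intro gk_anti[OF anti]) auto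
  then show "0 \<le> hk \<phi> k t" unfolding hk_def by simp
next
  fix a b :: real
  show "set_integrable lborel {a..b} (hk \<phi> k)"
    unfolding set_integrable_def by (intro integrable_mult_indicator hk_int[OF anti]) auto
qed

lemma tele:
  assumes anti: "antimono \<phi>" and k: "0 < k" and t: "0 < t"
  shows "Hf (hk \<phi> k) t = (\<integral>\<^sup>+ y\<in>{t<..t + 1 / real k}. ennreal (real k * gk \<phi> k y) \<partial>lborel)"
proof -
  define K where "K = real k"
  define d where "d = 1 / K"
  have K: "0 < K" unfolding K_def using k by simp
  have d: "0 < d" unfolding d_def using K by simp
  define G where "G y = ennreal (K * gk \<phi> k y)" for y
  have [measurable]: "gk \<phi> k \<in> borel_measurable borel" using anti by (rule gk_meas)
  have [measurable]: "hk \<phi> k \<in> borel_measurable borel" using anti by (rule hk_meas)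
  have Gm[measurable]: "G \<in> borel_measurable borel" unfolding G_def[abs_def] by measurable
  have hkK: "hk \<phi> k y = K * (gk \<phi> k y - gk \<phi> k (y + d))" for y unfolding hk_def K_def d_def by simp
  have E1: "Hf (hk \<phi> k) t + (\<integral>\<^sup>+ y\<in>{t<..}. ennreal (K * gk \<phi> k (y + d)) \<partial>lborel) = (\<integral>\<^sup>+ y\<in>{t<..}. G y \<partial>lborel)"
  proof -
    have "(\<integral>\<^sup>+ y\<in>{t<..}. G y \<partial>lborel) = (\<integral>\<^sup>+ y. ennreal (hk \<phi> k y) * indicator {t<..} y + ennreal (K * gk \<phi> k (y + d)) * indicator {t<..} y \<partial>lborel)"
    proof (rule nn_integral_cong)
      fix y :: real
      show "G y * indicator {t<..} y = ennreal (hk \<phi> k y) * indicator {t<..} y + ennreal (K * gk \<phi> k (y + d)) * indicator {t<..} y"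
      proof (cases "t < y")
        case True
        have "gk \<phi> k (y + d) \<le> gk \<phi> k y" using True t d by (intro gk_anti[OF anti]) auto
        then have h0: "0 \<le> hk \<phi> k y" unfolding hkK using K by simp
        have g0: "0 \<le> K * gk \<phi> k (y + d)" using K gk_nonneg[of \<phi> k] by simp
        have "G y = ennreal (hk \<phi> k y + K * gk \<phi> k (y + d))" unfolding G_def hkK by (simp add: algebra_simps)
        also have "\<dots> = ennreal (hk \<phi> k y) + ennreal (K * gk \<phi> k (y + d))" using h0 g0 by (simp add: ennreal_plus)
        finally show ?thesis using True by simp
      qed simp
    qed
    also have "\<dots> = Hf (hk \<phi> k) t + (\<integral>\<^sup>+ y\<in>{t<..}. ennreal (K * gk \<phi> k (y + d)) \<partial>lborel)"
      unfolding Hf_def by (rule nn_integral_add) auto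
    finally show ?thesis by simp
  qed
  have E2: "(\<integral>\<^sup>+ y\<in>{t<..}. ennreal (K * gk \<phi> k (y + d)) \<partial>lborel) = (\<integral>\<^sup>+ y\<in>{t + d<..}. G y \<partial>lborel)"
  proof -
    have mm: "(\<lambda>y. G y * indicator {t + d<..} y) \<in> borel_measurable borel" by measurable
    have "(\<integral>\<^sup>+ y. G y * indicator {t + d<..} y \<partial>lborel) = (\<integral>\<^sup>+ y. G (d + y) * indicator {t + d<..} (d + y) \<partial>lborel)"
      using nn_integral_real_affine[OF mm, of 1 d] by simp
    also have "\<dots> = (\<integral>\<^sup>+ y\<in>{t<..}. ennreal (K * gk \<phi> k (y + d)) \<partial>lborel)"
      by (intro nn_integral_cong) (auto simp: G_def indicator_def add.commute)
    finally show ?thesis by simp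
  qed
  have E3: "(\<integral>\<^sup>+ y\<in>{t<..}. G y \<partial>lborel) = (\<integral>\<^sup>+ y\<in>{t<..t + d}. G y \<partial>lborel) + (\<integral>\<^sup>+ y\<in>{t + d<..}. G y \<partial>lborel)"
  proof -
    have "(\<integral>\<^sup>+ y\<in>{t<..}. G y \<partial>lborel) = (\<integral>\<^sup>+ y. G y * indicator {t<..t + d} y + G y * indicator {t + d<..} y \<partial>lborel)"
      using d by (intro nn_integral_cong) (auto simp: indicator_def)
    also have "\<dots> = (\<integral>\<^sup>+ y\<in>{t<..t + d}. G y \<partial>lborel) + (\<integral>\<^sup>+ y\<in>{t + d<..}. G y \<partial>lborel)"
      by (rule nn_integral_add) auto
    finally show ?thesis .
  qed
  have E4: "(\<integral>\<^sup>+ y\<in>{t + d<..}. G y \<partial>lborel) < \<infinity>"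
  proof -
    have "(\<integral>\<^sup>+ y\<in>{t + d<..}. G y \<partial>lborel) \<le> (\<integral>\<^sup>+ y. ennreal (K * K) * indicator {0<..<K} y \<partial>lborel)"
    proof (rule nn_integral_mono)
      fix y :: real
      show "G y * indicator {t + d<..} y \<le> ennreal (K * K) * indicator {0<..<K} y"
      proof (cases "0 < y \<and> y < K")
        case True
        have "K * gk \<phi> k y \<le> K * K" using gk_le[of \<phi> k y] K unfolding K_def by simp
        then have "G y \<le> ennreal (K * K)" unfolding G_def by (rule ennreal_leI)
        then show ?thesis using True by (auto simp: indicator_def)
      next
        case False
        then have "gk \<phi> k y = 0" unfolding gk_def K_def by auto
        then show ?thesis unfolding G_def by simp
      qed
    qed
    also have "\<dots> = ennreal (K * K) * ennreal K" using K by (simp add: nn_integral_cmult_indicator)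
    also have "\<dots> < \<infinity>" by (simp add: ennreal_mult_less_top)
    finally show ?thesis .
  qed
  have "(\<integral>\<^sup>+ y\<in>{t + d<..}. G y \<partial>lborel) + Hf (hk \<phi> k) t = (\<integral>\<^sup>+ y\<in>{t + d<..}. G y \<partial>lborel) + (\<integral>\<^sup>+ y\<in>{t<..t + d}. G y \<partial>lborel)"
    using E1 E2 E3 by (simp add: add.commute)
  then have "(\<integral>\<^sup>+ y\<in>{t + d<..}. G y \<partial>lborel) = \<infinity> \<or> Hf (hk \<phi> k) t = (\<integral>\<^sup>+ y\<in>{t<..t + d}. G y \<partial>lborel)"
    by (simp only: ennreal_add_left_cancel)
  then have "Hf (hk \<phi> k) t = (\<integral>\<^sup>+ y\<in>{t<..t + d}. G y \<partial>lborel)"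
    using E4 by auto
  then show ?thesis unfolding G_def K_def d_def by simp
qed

lemma hk_le:
  assumes anti: "antimono \<phi>" and t: "0 < t"
  shows "Hf (hk \<phi> k) t \<le> \<phi> t"
proof (cases "k = 0")
  case True
  then have "hk \<phi> k = (\<lambda>y. 0)" by (simp add: hk_def fun_eq_iff)
  then show ?thesis by (simp add: Hf_def)
next
  case False
  then have k: "0 < k" by simp
  have "Hf (hk \<phi> k) t = (\<integral>\<^sup>+ y\<in>{t<..t + 1 / real k}. ennreal (real k * gk \<phi> k y) \<partial>lborel)"
    by (rule tele[OF anti k t])
  also have "\<dots> \<le> (\<integral>\<^sup>+ y. (of_nat k * \<phi> t) * indicator {t<..t + 1 / real k} y \<partial>lborel)"
  proof (rule nn_integral_mono)
    fix y
    show "ennreal (real k * gk \<phi> k y) * indicator {t<..t + 1 / real k} y \<le> (of_nat k * \<phi> t) * indicator {t<..t + 1 / real k} y"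
    proof (cases "t < y \<and> y \<le> t + 1 / real k")
      case True
      have "ennreal (gk \<phi> k y) \<le> \<phi> y" unfolding gk_ennreal by auto
      also have "\<phi> y \<le> \<phi> t" using anti True by (simp add: antimono_def)
      finally have g: "ennreal (gk \<phi> k y) \<le> \<phi> t" .
      have "ennreal (real k * gk \<phi> k y) = of_nat k * ennreal (gk \<phi> k y)"
        using gk_nonneg[of \<phi> k y] by (simp add: ennreal_mult ennreal_of_nat_eq_real_of_nat)
      also have "\<dots> \<le> of_nat k * \<phi> t" using g by (rule mult_left_mono) simp
      finally show ?thesis using True by simp
    qed simp
  qed
  also have "\<dots> = of_nat k * \<phi> t * ennreal (1 / real k)"
    by (simp add: nn_integral_cmult_indicator)
  also have "\<dots> = \<phi> t * (ennreal (real k) * ennreal (1 / real k))"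
    by (simp add: ennreal_of_nat_eq_real_of_nat mult_ac)
  also have "ennreal (real k) * ennreal (1 / real k) = 1"
    using k by (simp flip: ennreal_mult)
  finally show ?thesis by simp
qed

lemma hk_ev:
  assumes anti: "antimono \<phi>" and rc: "\<And>t x. 0 < t \<Longrightarrow> x < \<phi> t \<Longrightarrow> \<exists>r>t. x < \<phi> r"
    and t: "0 < t" and x: "x < \<phi> t"
  shows "eventually (\<lambda>k. x < Hf (hk \<phi> k) t) sequentially"
proof -
  obtain r where r: "t < r" "x < \<phi> r" using rc[OF t x] by blast
  obtain x' where x': "x < x'" "x' < \<phi> r" using dense r(2) by blast
  then have "x' \<noteq> top" using top.not_eq_extremum by force
  then obtain x0 where x0: "x' = ennreal x0" "0 \<le> x0" by (cases x' rule: ennreal_cases) auto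
  have rt: "0 < 1 / (r - t)" using r by simp
  obtain N :: nat where N: "x0 + 1 / (r - t) + t + 1 < real N" using reals_Archimedean2 by blast
  show ?thesis unfolding eventually_sequentially
  proof (intro exI[of _ N] allI impI)
    fix k assume kN: "N \<le> k"
    define K where "K = real k"
    have KN: "real N \<le> K" unfolding K_def using kN by simp
    have K0: "0 < K" and Kx0: "x0 < K" and Krt: "1 / (r - t) < K" and Kt: "t + 1 < K"
      using N KN rt x0(2) t by linarith+
    define d where "d = 1 / K"
    have d0: "0 < d" unfolding d_def using K0 by simp
    have drt: "d < r - t"
    proof -
      have "1 < K * (r - t)" using Krt r(1) by (simp add: divide_less_eq)
      then show ?thesis unfolding d_def using K0 by (simp add: divide_less_eq mult.commute)
    qed
    have d1: "d < 1" unfolding d_def using Kt t K0 by (simp add: divide_less_eq)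
    have k0: "0 < k" using K0 unfolding K_def by simp
    have "x' = ennreal (K * x0) * ennreal d"
      unfolding x0(1) d_def using K0 x0(2) by (simp flip: ennreal_mult)
    also have "\<dots> = (\<integral>\<^sup>+ y. ennreal (K * x0) * indicator {t<..t + d} y \<partial>lborel)"
      using d0 by (simp add: nn_integral_cmult_indicator)
    also have "\<dots> \<le> (\<integral>\<^sup>+ y\<in>{t<..t + d}. ennreal (real k * gk \<phi> k y) \<partial>lborel)"
    proof (rule nn_integral_mono)
      fix y
      show "ennreal (K * x0) * indicator {t<..t + d} y \<le> ennreal (real k * gk \<phi> k y) * indicator {t<..t + d} y"
      proof (cases "t < y \<and> y \<le> t + d")
        case True
        have y0: "0 < y" and yK: "y < real k" and yr: "y \<le> r"
          using True t d1 Kt drt unfolding K_def by linarith+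
        have "\<phi> r \<le> \<phi> y" using anti yr by (simp add: antimono_def)
        then have "x' < \<phi> y" using x'(2) by simp
        moreover have "x' < of_nat k" using Kx0 x0 unfolding K_def by (simp add: ennreal_of_nat_eq_real_of_nat ennreal_less_iff)
        ultimately have "x' \<le> min (\<phi> y) (of_nat k)" by (simp add: less_imp_le)
        also have "\<dots> = ennreal (gk \<phi> k y)" unfolding gk_ennreal using y0 yK by simp
        finally have "x0 \<le> gk \<phi> k y" unfolding x0(1) using gk_nonneg[of \<phi> k y] by (simp add: ennreal_le_iff)
        then have "K * x0 \<le> real k * gk \<phi> k y" unfolding K_def by (simp add: mult_left_mono)
        then show ?thesis using True by (simp add: ennreal_leI)
      qed simp
    qed
    also have "\<dots> = Hf (hk \<phi> k) t" unfolding d_def K_def by (rule tele[OF anti k0 t, symmetric])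
    finally show "x < Hf (hk \<phi> k) t" using x'(1) by simp
  qed
qed


lemma dir2:
  fixes f :: "'a::euclidean_space \<Rightarrow> real"
  assumes H: "\<forall>h\<in>Mplus. LHS w q (Hf h) \<le> RHS C u v m p (Hf h)" and f: "f \<in> borel_measurable lebesgue"
    and q: "0 < q" and m: "0 < m" and p: "0 < p" and w: "weight w"
  shows "LHS w q (rearr f) \<le> RHS C u v m p (rearr f)"
proof -
  define \<phi> where "\<phi> = rearr f"
  have anti: "antimono \<phi>" using rearr_antimono unfolding \<phi>_def .
  have rc: "\<And>t x. 0 < t \<Longrightarrow> x < \<phi> t \<Longrightarrow> \<exists>r>t. x < \<phi> r" using rearr_rc[OF f] unfolding \<phi>_def by blast
  define R where "R = RHS C u v m p \<phi>"
  define Hk where "Hk k = Hf (hk \<phi> k)" for k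
  define I where "I k = (\<integral>\<^sup>+ t\<in>{0<..}. ennreal (w t) * epow (Hk k t) q \<partial>lborel)" for k
  have Ik: "I k \<le> epow R q" for k
  proof -
    have "LHS w q (Hk k) \<le> RHS C u v m p (Hk k)" using H hk_Mplus[OF anti] unfolding Hk_def by blast
    also have "\<dots> \<le> R" unfolding R_def Hk_def using hk_le[OF anti] m p by (intro RHS_mono) auto
    finally have "epow (I k) (1/q) \<le> R" unfolding LHS_def I_def .
    then have "epow (epow (I k) (1/q)) q \<le> epow R q" using q by (rule epow_mono)
    then show ?thesis using epow_inv'[OF q] by simp
  qed
  have wm: "(\<lambda>t. ennreal (indicator {0<..} t *\<^sub>R w t)) \<in> borel_measurable lborel"
  proof -
    have "(\<lambda>t. indicator {0<..} t *\<^sub>R w t) \<in> borel_measurable lborel"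
      using w unfolding weight_def set_borel_measurable_def by simp
    then show ?thesis by measurable
  qed
  have meas: "(\<lambda>t. ennreal (w t) * epow (Hk k t) q * indicator {0<..} t) \<in> borel_measurable lborel" for k
  proof -
    have "antimono (\<lambda>t. epow (Hk k t) q)"
      using Hf_antimono[of "hk \<phi> k"] q unfolding Hk_def antimono_def by (auto intro: epow_mono)
    then have em: "(\<lambda>t. epow (Hk k t) q) \<in> borel_measurable lborel" using antimono_borel by simp
    have eq: "(\<lambda>t. ennreal (w t) * epow (Hk k t) q * indicator {0<..} t) = (\<lambda>t. ennreal (indicator {0<..} t *\<^sub>R w t) * epow (Hk k t) q)"
      by (auto simp: fun_eq_iff indicator_def)
    show ?thesis unfolding eq using wm em by (rule borel_measurable_times_ennreal)
  qed
  have pw: "ennreal (w t) * epow (\<phi> t) q * indicator {0<..} t \<le> liminf (\<lambda>k. ennreal (w t) * epow (Hk k t) q * indicator {0<..} t)" for t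
  proof (cases "0 < t")
    case False then show ?thesis by simp
  next
    case True
    show ?thesis unfolding le_Liminf_iff
    proof (intro allI impI)
      fix z assume "z < ennreal (w t) * epow (\<phi> t) q * indicator {0<..} t"
      then have z: "z < ennreal (w t) * epow (\<phi> t) q" using True by simp
      obtain y where y: "y < \<phi> t" "z < ennreal (w t) * epow y q" using comp_lsc[OF z q] by blast
      have "eventually (\<lambda>k. y < Hk k t) sequentially" unfolding Hk_def using hk_ev[OF anti rc True y(1)] .
      then show "eventually (\<lambda>k. z < ennreal (w t) * epow (Hk k t) q * indicator {0<..} t) sequentially"
      proof (rule eventually_mono)
        fix k assume "y < Hk k t"
        then have "epow y q \<le> epow (Hk k t) q" using q by (intro epow_mono) auto
        then have "ennreal (w t) * epow y q \<le> ennreal (w t) * epow (Hk k t) q" by (rule mult_left_mono) simp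
        then show "z < ennreal (w t) * epow (Hk k t) q * indicator {0<..} t" using y(2) True by simp
      qed
    qed
  qed
  have "(\<integral>\<^sup>+ t\<in>{0<..}. ennreal (w t) * epow (\<phi> t) q \<partial>lborel)
      \<le> (\<integral>\<^sup>+ t. liminf (\<lambda>k. ennreal (w t) * epow (Hk k t) q * indicator {0<..} t) \<partial>lborel)"
    by (rule nn_integral_mono) (rule pw)
  also have "\<dots> \<le> liminf (\<lambda>k. I k)" unfolding I_def by (rule nn_integral_liminf) (rule meas)
  also have "\<dots> \<le> epow R q"
    by (rule order_trans[OF Liminf_le_Limsup Limsup_bounded]) (auto simp: Ik)
  finally have "LHS w q \<phi> \<le> epow (epow R q) (1/q)" unfolding LHS_def using q by (intro epow_mono) auto
  then show ?thesis using epow_inv[OF q] unfolding R_def \<phi>_def by simp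
qed

theorem lemma3p9:
  fixes m p q C :: real and u v w :: "real \<Rightarrow> real"
  assumes "0 < m" "0 < p" "0 < q" "0 < C"
    and "weight u" "weight v" "weight w"
    and "admissible u v m p"
  shows "(\<forall>f :: 'a::euclidean_space \<Rightarrow> real. f \<in> borel_measurable lebesgue \<longrightarrow>
            epow (\<integral>\<^sup>+ t\<in>{0<..}. ennreal (w t) * epow (rearr f t) q \<partial>lborel) (1 / q)
            \<le> ennreal C * epow (\<integral>\<^sup>+ t\<in>{0<..}. ennreal (v t) *
                 epow (\<integral>\<^sup>+ s\<in>{t<..}. ennreal (u s) * epow (rearr f s) m \<partial>lborel) (p / m) \<partial>lborel) (1 / p))
     \<longleftrightarrow>
     (\<forall>h\<in>Mplus.
            epow (\<integral>\<^sup>+ t\<in>{0<..}. ennreal (w t) * epow (\<integral>\<^sup>+ y\<in>{t<..}. ennreal (h y) \<partial>lborel) q \<partial>lborel) (1 / q)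
            \<le> ennreal C * epow (\<integral>\<^sup>+ t\<in>{0<..}. ennreal (v t) *
                 epow (\<integral>\<^sup>+ s\<in>{t<..}. ennreal (u s) *
                   epow (\<integral>\<^sup>+ y\<in>{s<..}. ennreal (h y) \<partial>lborel) m \<partial>lborel) (p / m) \<partial>lborel) (1 / p))"
proof -
  have "(\<forall>f :: 'a \<Rightarrow> real. f \<in> borel_measurable lebesgue \<longrightarrow> LHS w q (rearr f) \<le> RHS C u v m p (rearr f))
     \<longleftrightarrow> (\<forall>h\<in>Mplus. LHS w q (Hf h) \<le> RHS C u v m p (Hf h))"
  proof
    assume F: "\<forall>f :: 'a \<Rightarrow> real. f \<in> borel_measurable lebesgue \<longrightarrow> LHS w q (rearr f) \<le> RHS C u v m p (rearr f)"
    show "\<forall>h\<in>Mplus. LHS w q (Hf h) \<le> RHS C u v m p (Hf h)" using dir1[OF F] by blast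
  next
    assume H: "\<forall>h\<in>Mplus. LHS w q (Hf h) \<le> RHS C u v m p (Hf h)"
    show "\<forall>f :: 'a \<Rightarrow> real. f \<in> borel_measurable lebesgue \<longrightarrow> LHS w q (rearr f) \<le> RHS C u v m p (rearr f)"
      using dir2[OF H _ assms(3,1,2,7)] by blast
  qed
  then show ?thesis unfolding LHS_def RHS_def Hf_def .
qed

end
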